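(* Let $\mathcal{A}$ be a finite abelian group with $|\mathcal{A}|\ge 3$. Let $H_1(p_1,p_2)$ denote a graph consisting of a triangle $v_2v_3v_4$, a vertex $v_1$ adjacent to $v_2$, $p_1$ pendant vertices adjacent to $v_1$, $p_2\ge0$ pendant vertices adjacent to $v_2$, and $t\ge 1$ further neighbours of $v_1$, each of which is a support vertex all of whose neighbours other than $v_1$ are pendant vertices. Suppose $p_1\ge 1$. Then $H_1(p_1,p_2)$ is $\mathcal{A}$-vertex magic if and only if $p_2=0$ and: (i) if $p_1=1$, every support neighbour of $v_1$ is a strong support vertex and there exist an involution $h$ of $\mathcal{A}$ and $g\in\mathcal{A}\setminus\{0,h\}$ with $h\neq (d(v_1)-2)g$; (ii) if $p_1\ge 2$, every support neighbour of $v_1$ is a strong support vertex and $|\mathcal{A}|$ is even.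
   Context: A pendant vertex has degree $1$; a support vertex is a vertex adjacent to a pendant vertex, and a strong support vertex is one adjacent to at least two pendant vertices. $d(v)$ is the degree of $v$; an involution is an element of order $2$. A map $\ell:V(G)\to\mathcal{A}\setminus\{0\}$ is an $\mathcal{A}$-vertex magic labeling if there is $\mu\in\mathcal{A}$ with $\sum_{u\in N(v)}\ell(u)=\mu$ for every vertex $v$; $G$ is $\mathcal{A}$-vertex magic if such a labeling exists. *)

theory Defs
  imports Main
begin

text \<open>Simple graphs given by a vertex set V and a symmetric irreflexive adjacency relation.\<close>

definition nbrs :: "'v set \<Rightarrow> ('v \<Rightarrow> 'v \<Rightarrow> bool) \<Rightarrow> 'v \<Rightarrow> 'v set" where
  "nbrs V adj v = {u \<in> V. adj v u}"

definition degree :: "'v set \<Rightarrow> ('v \<Rightarrow> 'v \<Rightarrow> bool) \<Rightarrow> 'v \<Rightarrow> nat" where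
  "degree V adj v = card (nbrs V adj v)"

definition vertex_magic_labeling ::
  "'v set \<Rightarrow> ('v \<Rightarrow> 'v \<Rightarrow> bool) \<Rightarrow> ('v \<Rightarrow> 'a::ab_group_add) \<Rightarrow> bool" where
  "vertex_magic_labeling V adj l \<longleftrightarrow>
     (\<forall>v\<in>V. l v \<noteq> 0) \<and> (\<exists>\<mu>. \<forall>v\<in>V. (\<Sum>u\<in>nbrs V adj v. l u) = \<mu>)"

definition vertex_magic ::
  "'a::ab_group_add itself \<Rightarrow> 'v set \<Rightarrow> ('v \<Rightarrow> 'v \<Rightarrow> bool) \<Rightarrow> bool" where
  "vertex_magic _ V adj \<longleftrightarrow> (\<exists>l :: 'v \<Rightarrow> 'a. vertex_magic_labeling V adj l)"

primrec nmul :: "nat \<Rightarrow> 'a::ab_group_add \<Rightarrow> 'a" where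
  "nmul 0 g = 0"
| "nmul (Suc n) g = g + nmul n g"

definition involution :: "'a::ab_group_add \<Rightarrow> bool" where
  "involution h \<longleftrightarrow> h \<noteq> 0 \<and> h + h = 0"

text \<open>The graph H_1(p1,p2): triangle V2 V3 V4, V1 adjacent to V2, p1 pendants P1 i at V1,
  p2 pendants P2 i at V2, t support neighbours S j of V1, and S j has q j pendants L j k.\<close>
datatype hvert = V1 | V2 | V3 | V4 | P1 nat | P2 nat | S nat | L nat nat

definition H1_V :: "nat \<Rightarrow> nat \<Rightarrow> nat \<Rightarrow> (nat \<Rightarrow> nat) \<Rightarrow> hvert set" where
  "H1_V p1 p2 t q = {V1, V2, V3, V4} \<union> P1 ` {..<p1} \<union> P2 ` {..<p2} \<union> S ` {..<t}
      \<union> {L j k | j k. j < t \<and> k < q j}"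

fun H1_edge0 :: "hvert \<Rightarrow> hvert \<Rightarrow> bool" where
  "H1_edge0 V2 V3 = True"
| "H1_edge0 V3 V4 = True"
| "H1_edge0 V2 V4 = True"
| "H1_edge0 V1 V2 = True"
| "H1_edge0 V1 (P1 i) = True"
| "H1_edge0 V2 (P2 i) = True"
| "H1_edge0 V1 (S j) = True"
| "H1_edge0 (S j) (L j' k) = (j = j')"
| "H1_edge0 _ _ = False"

definition H1_adj :: "hvert \<Rightarrow> hvert \<Rightarrow> bool" where
  "H1_adj u v \<longleftrightarrow> H1_edge0 u v \<or> H1_edge0 v u"

end

theory Submission
  imports Defs
begin

lemma fpf_even:
  assumes "finite T" "\<forall>x\<in>T. f x \<in> T \<and> f x \<noteq> x \<and> f (f x) = x"
  shows "even (card T)"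
  using assms
proof (induction "card T" arbitrary: T rule: less_induct)
  case less
  show ?case
  proof (cases "T = {}")
    case True then show ?thesis by simp
  next
    case False
    then obtain x where x: "x \<in> T" by blast
    define T' where "T' = T - {x, f x}"
    have fx: "f x \<in> T" "f x \<noteq> x" using less.prems x by auto
    have sub: "{x, f x} \<subseteq> T" using x fx by auto
    have c2: "card {x, f x} = 2" using fx by auto
    have cT': "card T' = card T - 2"
      unfolding T'_def using card_Diff_subset[OF _ sub] c2 by simp
    have ge: "card T \<ge> 2" using card_mono[OF less.prems(1) sub] c2 by simp
    have "even (card T')"
    proof (rule less.hyps)
      show "card T' < card T" using cT' ge by simp
      show "finite T'" using less.prems(1) T'_def by simp
      show "\<forall>y\<in>T'. f y \<in> T' \<and> f y \<noteq> y \<and> f (f y) = y"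
      proof
        fix y assume y: "y \<in> T'"
        then have yS: "y \<in> T" "y \<noteq> x" "y \<noteq> f x" by (auto simp: T'_def)
        have p: "f y \<in> T" "f y \<noteq> y" "f (f y) = y" using less.prems(2) yS(1) by auto
        have "f y \<noteq> x" using p yS by metis
        moreover have "f y \<noteq> f x" using p yS less.prems(2) x by metis
        ultimately show "f y \<in> T' \<and> f y \<noteq> y \<and> f (f y) = y" using p by (auto simp: T'_def)
      qed
    qed
    then show ?thesis using cT' ge by (metis add_diff_inverse_nat even_add not_less dvd_refl)
  qed
qed

lemma even_iff_involution:
  "even (card (UNIV :: 'a::{ab_group_add,finite} set)) \<longleftrightarrow> (\<exists>h::'a. involution h)"
proof
  assume ev: "even (card (UNIV :: 'a set))"
  show "\<exists>h::'a. involution h"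
  proof (rule ccontr)
    assume no: "\<not> (\<exists>h::'a. involution h)"
    have "even (card (UNIV - {0::'a}))"
    proof (rule fpf_even[where f = uminus])
      show "finite (UNIV - {0::'a})" by simp
      show "\<forall>x\<in>UNIV - {0::'a}. - x \<in> UNIV - {0} \<and> - x \<noteq> x \<and> - (- x) = x"
      proof
        fix x :: 'a assume "x \<in> UNIV - {0}"
        then have "x \<noteq> 0" by simp
        moreover have "-x \<noteq> x"
        proof
          assume "-x = x"
          then have "x + x = x + - x" by simp
          then have "x + x = 0" by simp
          with \<open>x \<noteq> 0\<close> no show False by (auto simp: involution_def)
        qed
        ultimately show "- x \<in> UNIV - {0} \<and> - x \<noteq> x \<and> - (- x) = x" by simp
      qed
    qed
    moreover have "card (insert (0::'a) (UNIV - {0})) = Suc (card (UNIV - {0::'a}))"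
      by (rule card_insert_disjoint) auto
    moreover have "insert (0::'a) (UNIV - {0}) = UNIV" by blast
    ultimately show False using ev by simp
  qed
next
  assume "\<exists>h::'a. involution h"
  then obtain h :: 'a where h: "h \<noteq> 0" "h + h = 0" by (auto simp: involution_def)
  show "even (card (UNIV :: 'a set))"
  proof (rule fpf_even[where f = "\<lambda>x. x + h"])
    show "finite (UNIV :: 'a set)" by simp
    show "\<forall>x\<in>UNIV. x + h \<in> UNIV \<and> x + h \<noteq> x \<and> x + h + h = x"
      using h by (simp add: add.assoc)
  qed
qed

lemma exists_other:
  assumes "card (UNIV :: 'a::finite set) \<ge> 3"
  shows "\<exists>c::'a. c \<noteq> x \<and> c \<noteq> y"
proof (rule ccontr)
  assume "\<not> ?thesis"
  then have "(UNIV :: 'a set) \<subseteq> {x, y}" by auto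
  then have "card (UNIV :: 'a set) \<le> card {x, y}" by (simp add: card_mono)
  also have "\<dots> \<le> 2" by (simp add: card_insert_le_m1)
  finally show False using assms by simp
qed

lemma target_sum:
  assumes "card (UNIV :: 'a::{ab_group_add,finite} set) \<ge> 3" "n \<ge> 2"
  shows "\<exists>a::nat \<Rightarrow> 'a. (\<forall>k<n. a k \<noteq> 0) \<and> sum a {..<n} = s"
  using assms(2)
proof (induction n arbitrary: s rule: dec_induct)
  case base
  obtain c :: 'a where c: "c \<noteq> 0" "c \<noteq> s" using exists_other[OF assms(1)] by blast
  define a where "a = (\<lambda>k::nat. if k = 0 then c else s - c)"
  have "\<forall>k<2. a k \<noteq> 0" using c by (auto simp: a_def less_2_cases_iff)
  moreover have "sum a {..<2} = s" by (simp add: a_def numeral_2_eq_2)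
  ultimately show ?case by blast
next
  case (step m)
  obtain c :: 'a where c: "c \<noteq> 0" "c \<noteq> 0" using exists_other[OF assms(1)] by blast
  obtain a where a: "\<forall>k<m. a k \<noteq> 0" "sum a {..<m} = s - c" using step.IH by blast
  define a' where "a' = (\<lambda>k. if k = m then c else a k)"
  have "\<forall>k<Suc m. a' k \<noteq> 0" using a c by (auto simp: a'_def less_Suc_eq)
  moreover have "sum a' {..<Suc m} = s"
  proof -
    have "sum a' {..<m} = sum a {..<m}" by (rule sum.cong) (auto simp: a'_def)
    then show ?thesis using a by (simp add: a'_def)
  qed
  ultimately show ?case by blast
qed

lemma sum_const_nmul: "(\<Sum>i\<in>{..<n}. (c::'a::ab_group_add)) = nmul n c"
  by (induction n) (simp_all add: add.commute)

abbreviation "HV p1 p2 t q \<equiv> H1_V p1 p2 t q"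

lemma mem_V:
  "V1 \<in> H1_V p1 p2 t q" "V2 \<in> H1_V p1 p2 t q" "V3 \<in> H1_V p1 p2 t q" "V4 \<in> H1_V p1 p2 t q"
  "P1 i \<in> H1_V p1 p2 t q \<longleftrightarrow> i < p1"
  "P2 i \<in> H1_V p1 p2 t q \<longleftrightarrow> i < p2"
  "S j \<in> H1_V p1 p2 t q \<longleftrightarrow> j < t"
  "L j k \<in> H1_V p1 p2 t q \<longleftrightarrow> j < t \<and> k < q j"
  by (auto simp: H1_V_def)

lemma finV: "finite (H1_V p1 p2 t q)"
proof -
  have "{L j k | j k. j < t \<and> k < q j} \<subseteq> (\<lambda>(j,k). L j k) ` ({..<t} \<times> {..<Max (q ` {..<t}) + 1})"
  proof
    fix x assume "x \<in> {L j k | j k. j < t \<and> k < q j}"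
    then obtain j k where "x = L j k" "j < t" "k < q j" by blast
    have m: "q j \<le> Max (q ` {..<t})" using \<open>j < t\<close> by simp
    have "k < Max (q ` {..<t}) + 1" using m \<open>k < q j\<close> by linarith
    then have "(j,k) \<in> {..<t} \<times> {..<Max (q ` {..<t}) + 1}" using \<open>j < t\<close> by blast
    then show "x \<in> (\<lambda>(j,k). L j k) ` ({..<t} \<times> {..<Max (q ` {..<t}) + 1})"
      using \<open>x = L j k\<close> by (intro rev_image_eqI[of "(j,k)"]) auto
  qed
  then have "finite {L j k | j k. j < t \<and> k < q j}" by (rule finite_subset) simp
  then show ?thesis by (simp add: H1_V_def)
qed

lemma nb_V1: "nbrs (H1_V p1 p2 t q) H1_adj V1 = insert V2 (P1 ` {..<p1} \<union> S ` {..<t})"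
  apply (rule set_eqI) subgoal for x by (cases x) (auto simp: nbrs_def H1_adj_def H1_V_def) done
lemma nb_V2: "nbrs (H1_V p1 p2 t q) H1_adj V2 = insert V1 (insert V3 (insert V4 (P2 ` {..<p2})))"
  apply (rule set_eqI) subgoal for x by (cases x) (auto simp: nbrs_def H1_adj_def H1_V_def) done
lemma nb_V3: "nbrs (H1_V p1 p2 t q) H1_adj V3 = {V2, V4}"
  apply (rule set_eqI) subgoal for x by (cases x) (auto simp: nbrs_def H1_adj_def H1_V_def) done
lemma nb_V4: "nbrs (H1_V p1 p2 t q) H1_adj V4 = {V2, V3}"
  apply (rule set_eqI) subgoal for x by (cases x) (auto simp: nbrs_def H1_adj_def H1_V_def) done
lemma nb_P1: "nbrs (H1_V p1 p2 t q) H1_adj (P1 i) = {V1}"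
  apply (rule set_eqI) subgoal for x by (cases x) (auto simp: nbrs_def H1_adj_def H1_V_def) done
lemma nb_P2: "nbrs (H1_V p1 p2 t q) H1_adj (P2 i) = {V2}"
  apply (rule set_eqI) subgoal for x by (cases x) (auto simp: nbrs_def H1_adj_def H1_V_def) done
lemma nb_S: "j < t \<Longrightarrow> nbrs (H1_V p1 p2 t q) H1_adj (S j) = insert V1 (L j ` {..<q j})"
  apply (rule set_eqI) subgoal for x by (cases x) (auto simp: nbrs_def H1_adj_def H1_V_def) done
lemma nb_L: "j < t \<Longrightarrow> nbrs (H1_V p1 p2 t q) H1_adj (L j k) = {S j}"
  apply (rule set_eqI) subgoal for x by (cases x) (auto simp: nbrs_def H1_adj_def H1_V_def) done

lemma sum_V1: "(\<Sum>u\<in>nbrs (H1_V p1 p2 t q) H1_adj V1. f u) =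
   f V2 + (\<Sum>i<p1. f (P1 i)) + (\<Sum>j<t. f (S j))"
proof -
  have "(\<Sum>u\<in>P1 ` {..<p1} \<union> S ` {..<t}. f u) = (\<Sum>u\<in>P1 ` {..<p1}. f u) + (\<Sum>u\<in>S ` {..<t}. f u)"
    by (rule sum.union_disjoint) auto
  also have "\<dots> = (\<Sum>i<p1. f (P1 i)) + (\<Sum>j<t. f (S j))"
    by (simp add: sum.reindex inj_on_def)
  finally show ?thesis unfolding nb_V1 by (subst sum.insert) (auto simp: add.assoc)
qed

lemma sum_V2: "(\<Sum>u\<in>nbrs (H1_V p1 p2 t q) H1_adj V2. f u) =
   f V1 + f V3 + f V4 + (\<Sum>i<p2. f (P2 i))"
  unfolding nb_V2 by (simp add: sum.reindex inj_on_def image_iff add.assoc)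

lemma sum_S: "j < t \<Longrightarrow> (\<Sum>u\<in>nbrs (H1_V p1 p2 t q) H1_adj (S j). f u) =
   f V1 + (\<Sum>k<q j. f (L j k))"
  unfolding nb_S by (simp add: sum.reindex inj_on_def image_iff)

lemma deg_V1: "degree (H1_V p1 p2 t q) H1_adj V1 = 1 + p1 + t"
  using sum_V1[where f="\<lambda>_. (1::nat)"] by (simp add: degree_def)

theorem proposition3p5:
  fixes p1 p2 t :: nat and q :: "nat \<Rightarrow> nat"
    and A :: "'a::{ab_group_add, finite} itself"
  assumes "card (UNIV :: 'a set) \<ge> 3"
    and "t \<ge> 1"
    and "\<forall>j<t. q j \<ge> 1"
    and "p1 \<ge> 1"
  shows "vertex_magic A (H1_V p1 p2 t q) H1_adj \<longleftrightarrow>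
    (p2 = 0 \<and>
     (p1 = 1 \<longrightarrow> (\<forall>j<t. q j \<ge> 2) \<and>
        (\<exists>h g :: 'a. involution h \<and> g \<noteq> 0 \<and> g \<noteq> h \<and>
           h \<noteq> nmul (degree (H1_V p1 p2 t q) H1_adj V1 - 2) g)) \<and>
     (p1 \<ge> 2 \<longrightarrow> (\<forall>j<t. q j \<ge> 2) \<and> even (card (UNIV :: 'a set))))"
proof -
  note card3 = assms(1) and q1 = assms(3) and p1pos = assms(4)
  define V where "V = H1_V p1 p2 t q"
  have dV1: "degree V H1_adj V1 - 2 = t" if "p1 = 1" using that by (simp add: V_def deg_V1)
  show ?thesis unfolding V_def[symmetric]
  proof
    assume "vertex_magic A V H1_adj"
    then obtain l :: "hvert \<Rightarrow> 'a" and \<mu> where nz: "\<forall>v\<in>V. l v \<noteq> 0"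
      and mu: "\<forall>v\<in>V. (\<Sum>u\<in>nbrs V H1_adj v. l u) = \<mu>"
      by (auto simp: vertex_magic_def vertex_magic_labeling_def)
    have P10: "P1 0 \<in> V" using p1pos by (simp add: V_def mem_V)
    have f1: "l V1 = \<mu>" using mu[rule_format, OF P10] by (simp add: V_def nb_P1)
    have fS: "l (S j) = \<mu>" if "j < t" for j
    proof -
      have "L j 0 \<in> V" using that q1 by (auto simp: V_def mem_V)
      from mu[rule_format, OF this] that show ?thesis by (simp add: V_def nb_L)
    qed
    have f3: "l V2 + l V4 = \<mu>" using mu[rule_format, of V3] by (simp add: V_def nb_V3 mem_V)
    have f4: "l V2 + l V3 = \<mu>" using mu[rule_format, of V4] by (simp add: V_def nb_V4 mem_V)
    have nzV: "l V1 \<noteq> 0" "l V2 \<noteq> 0" "l V3 \<noteq> 0" "l V4 \<noteq> 0" using nz by (auto simp: V_def mem_V)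
    have p20: "p2 = 0"
    proof (rule ccontr)
      assume "p2 \<noteq> 0"
      then have "P2 0 \<in> V" by (simp add: V_def mem_V)
      from mu[rule_format, OF this] have "l V2 = \<mu>" by (simp add: V_def nb_P2)
      with f3 have "l V4 = 0" by simp
      with nzV show False by simp
    qed
    have f2: "l V1 + l V3 + l V4 = \<mu>" using mu[rule_format, of V2] p20
      by (simp add: V_def sum_V2 mem_V)
    have e34: "l V3 = l V4" using f3 f4 by (metis add_left_cancel)
    define h where "h = l V3"
    have hh: "h + h = 0" using f2 f1 e34 by (simp add: h_def add.assoc)
    have inv: "involution h" using hh nzV by (simp add: involution_def h_def)
    have lV2: "l V2 = \<mu> - h" using f4 by (simp add: h_def eq_diff_eq)
    have muh: "\<mu> \<noteq> h" using lV2 nzV by simp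
    have mu0: "\<mu> \<noteq> 0" using f1 nzV by simp
    have q2: "\<forall>j<t. q j \<ge> 2"
    proof (intro allI impI)
      fix j assume j: "j < t"
      have "S j \<in> V" using j by (simp add: V_def mem_V)
      from mu[rule_format, OF this] j f1
      have s0: "(\<Sum>k<q j. l (L j k)) = 0" by (simp add: V_def sum_S)
      show "q j \<ge> 2"
      proof (rule ccontr)
        assume "\<not> q j \<ge> 2"
        with q1 j have "q j = 1" by force
        then have "l (L j 0) = 0" using s0 by simp
        moreover have "L j 0 \<in> V" using j \<open>q j = 1\<close> by (simp add: V_def mem_V)
        ultimately show False using nz by auto
      qed
    qed
    have sS: "(\<Sum>j<t. l (S j)) = nmul t \<mu>"
      using sum.cong[OF refl, of "{..<t}" "\<lambda>j. l (S j)" "\<lambda>_. \<mu>"] fS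
      by (simp add: sum_const_nmul)
    have fV1: "l V2 + (\<Sum>i<p1. l (P1 i)) + nmul t \<mu> = \<mu>"
      using mu[rule_format, of V1] sS by (simp add: V_def sum_V1 mem_V)
    have c1: "\<exists>h g :: 'a. involution h \<and> g \<noteq> 0 \<and> g \<noteq> h \<and> h \<noteq> nmul (degree V H1_adj V1 - 2) g"
      if "p1 = 1"
    proof (intro exI conjI)
      show "involution h" "\<mu> \<noteq> 0" "\<mu> \<noteq> h" by fact+
      show "h \<noteq> nmul (degree V H1_adj V1 - 2) \<mu>"
      proof
        assume "h = nmul (degree V H1_adj V1 - 2) \<mu>"
        then have ht: "h = nmul t \<mu>" using dV1 that by simp
        have "l V2 + l (P1 0) + nmul t \<mu> = \<mu>" using fV1 that by simp
        then have "l (P1 0) = 0" using lV2 ht by (simp add: algebra_simps)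
        with nz P10 show False by auto
      qed
    qed
    have "even (card (UNIV :: 'a set))" using inv even_iff_involution by blast
    with p20 q2 c1 show "p2 = 0 \<and>
     (p1 = 1 \<longrightarrow> (\<forall>j<t. q j \<ge> 2) \<and>
        (\<exists>h g :: 'a. involution h \<and> g \<noteq> 0 \<and> g \<noteq> h \<and>
           h \<noteq> nmul (degree V H1_adj V1 - 2) g)) \<and>
     (p1 \<ge> 2 \<longrightarrow> (\<forall>j<t. q j \<ge> 2) \<and> even (card (UNIV :: 'a set)))" by blast
  next
    assume R: "p2 = 0 \<and>
     (p1 = 1 \<longrightarrow> (\<forall>j<t. q j \<ge> 2) \<and>
        (\<exists>h g :: 'a. involution h \<and> g \<noteq> 0 \<and> g \<noteq> h \<and>
           h \<noteq> nmul (degree V H1_adj V1 - 2) g)) \<and>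
     (p1 \<ge> 2 \<longrightarrow> (\<forall>j<t. q j \<ge> 2) \<and> even (card (UNIV :: 'a set)))"
    have p20: "p2 = 0" using R by blast
    have q2: "\<forall>j<t. q j \<ge> 2" using R p1pos by (cases "p1 = 1") auto
    obtain h \<mu> :: 'a where inv: "involution h" and mu0: "\<mu> \<noteq> 0" and muh: "\<mu> \<noteq> h"
      and ht: "p1 = 1 \<Longrightarrow> h \<noteq> nmul t \<mu>"
    proof (cases "p1 = 1")
      case True
      then obtain h g :: 'a where "involution h" "g \<noteq> 0" "g \<noteq> h" "h \<noteq> nmul t g"
        using R dV1 by auto
      then show ?thesis using that by blast
    next
      case False
      then have "even (card (UNIV :: 'a set))" using R p1pos by auto
      then obtain h :: 'a where "involution h" using even_iff_involution by blast
      moreover obtain g :: 'a where "g \<noteq> 0" "g \<noteq> h" using exists_other[OF card3] by blast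
      ultimately show ?thesis using that False by blast
    qed
    obtain a :: "nat \<Rightarrow> 'a" where anz: "\<forall>i<p1. a i \<noteq> 0" and asum: "sum a {..<p1} = h - nmul t \<mu>"
    proof (cases "p1 = 1")
      case True
      have "h - nmul t \<mu> \<noteq> 0" using ht[OF True] by simp
      then show ?thesis using that[of "\<lambda>_. h - nmul t \<mu>"] True by simp
    next
      case False
      then have "p1 \<ge> 2" using p1pos by simp
      from target_sum[OF card3 this] that show ?thesis by blast
    qed
    have "\<forall>n. \<exists>b::nat \<Rightarrow> 'a. n \<ge> 2 \<longrightarrow> (\<forall>k<n. b k \<noteq> 0) \<and> sum b {..<n} = 0"
      using target_sum[OF card3] by blast
    then obtain B :: "nat \<Rightarrow> nat \<Rightarrow> 'a" where
      B: "\<And>n. n \<ge> 2 \<Longrightarrow> (\<forall>k<n. B n k \<noteq> 0) \<and> sum (B n) {..<n} = 0"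
      by metis
    have h0: "h \<noteq> 0" and hh: "h + h = 0" using inv by (auto simp: involution_def)
    define l where "l = (\<lambda>v. case v of V1 \<Rightarrow> \<mu> | V2 \<Rightarrow> \<mu> - h | V3 \<Rightarrow> h | V4 \<Rightarrow> h
       | P1 i \<Rightarrow> a i | P2 i \<Rightarrow> \<mu> | S j \<Rightarrow> \<mu> | L j k \<Rightarrow> B (q j) k)"
    have "\<forall>v\<in>V. l v \<noteq> 0"
    proof
      fix v assume v: "v \<in> V"
      show "l v \<noteq> 0"
      proof (cases v)
        case (L j k)
        then have "j < t" "k < q j" using v by (auto simp: V_def mem_V)
        then show ?thesis using B[of "q j"] q2 L by (auto simp: l_def)
      qed (use v mu0 muh h0 anz in \<open>auto simp: l_def V_def mem_V\<close>)
    qed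
    moreover have "\<forall>v\<in>V. (\<Sum>u\<in>nbrs V H1_adj v. l u) = \<mu>"
    proof
      fix v assume v: "v \<in> V"
      show "(\<Sum>u\<in>nbrs V H1_adj v. l u) = \<mu>"
      proof (cases v)
        case V1
        have "(\<Sum>j<t. l (S j)) = nmul t \<mu>" by (simp add: l_def sum_const_nmul)
        moreover have "(\<Sum>i<p1. l (P1 i)) = h - nmul t \<mu>" using asum by (simp add: l_def)
        ultimately show ?thesis using V1 by (simp add: V_def sum_V1 l_def)
      next
        case V2
        then show ?thesis using p20 hh by (simp add: V_def sum_V2 l_def add.assoc)
      next
        case V3
        then show ?thesis by (simp add: V_def nb_V3 l_def)
      next
        case V4
        then show ?thesis by (simp add: V_def nb_V4 l_def)
      next
        case (P1 i)
        then show ?thesis by (simp add: V_def nb_P1 l_def)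
      next
        case (P2 i)
        then show ?thesis using v p20 by (simp add: V_def mem_V)
      next
        case (S j)
        then have j: "j < t" using v by (simp add: V_def mem_V)
        have "(\<Sum>k<q j. l (L j k)) = 0" using B[of "q j"] q2 j by (simp add: l_def)
        then show ?thesis using S j by (simp add: V_def sum_S l_def)
      next
        case (L j k)
        then have j: "j < t" using v by (simp add: V_def mem_V)
        then show ?thesis using L by (simp add: V_def nb_L l_def)
      qed
    qed
    ultimately show "vertex_magic A V H1_adj"
      by (auto simp: vertex_magic_def vertex_magic_labeling_def)
  qed
qed

end
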